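(* Consider the FlexPD-C iterates described in the context with $\beta>0$, integer $T\ge1$ and $0<\alpha<1/\rho(B)$, and let $C=\sum_{t=0}^{T-1}(I-\alpha B)^t$, $M=C^{-1}(I-\alpha B)^T$, $N=\frac{1}{\alpha}(C^{-1}-M)$. Then for any $\tilde d,\tilde g,\tilde e>1$ and every $k\ge0$, \[\|\lambda^{k+1}-\lambda^*\|^2\le\frac{\tilde d}{\alpha^2 s(AA')}\Big(\frac{\tilde e}{\tilde e-1}\rho(M)^2+\tilde e\alpha^2L^2\Big)\|x^k-x^{k+1}\|^2+\frac{\tilde d}{(\tilde d-1)\alpha^2 s(AA')}\Big(\frac{\tilde g}{\tilde g-1}\alpha^2\rho\big((\beta A'A-N)^2\big)+\tilde g\alpha^2L^2\Big)\|x^{k+1}-x^*\|^2,\] where $s(AA')$ is the smallest nonzero eigenvalue of $AA'$.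
   Context: Setting: $n$ agents are connected by a connected undirected graph with edge set $\mathcal E$, $\epsilon=|\mathcal E|$. For $x\in\mathbb R^n$ let $f(x)=\sum_{i=1}^n f_i(x_i)$, where each $f_i:\mathbb R\to\mathbb R$ is twice differentiable with $m\le f_i''\le L$ for constants $0<m\le L$; $\nabla f(x)=(f_1'(x_1),\dots,f_n'(x_n))'$. $A\in\mathbb R^{\epsilon\times n}$ is the edge–node incidence matrix (null space spanned by the all-ones vector). $B\in\mathbb R^{n\times n}$ is symmetric positive semidefinite with the same null space as $A$, off-diagonal entries nonzero only on edges. $x^*$ is the unique minimizer of $f$ subject to $Ax=0$ and $\lambda^*$ a Lagrange multiplier with $\nabla f(x^* )+A'\lambda^*=0$, $Ax^*=0$, $Bx^*=0$, chosen in the column space of $A$ (orthogonal to the null space of $A'$). FlexPD-C: given $\alpha,\beta>0$, $T\ge1$, $x^0$ arbitrary, $\lambda^0=0$; for $k\ge0$: $x^{k+1,0}=x^k$; for $t=1,\dots,T$, $x^{k+1,t}=x^{k+1,t-1}-\alpha\nabla f(x^k)-\alpha A'\lambda^k-\alpha Bx^{k+1,t-1}$; then $x^{k+1}=x^{k+1,T}$, $\lambda^{k+1}=\lambda^k+\beta Ax^{k+1}$. Notation: $\rho(S)$ largest eigenvalue of a symmetric matrix $S$; $\|\cdot\|$ Euclidean norm. *)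

theory Defs
  imports "HOL-Analysis.Analysis"
begin

text \<open>Matrix power with respect to the matrix product (note: the ring structure of
  vec is componentwise, so the power operator would not be the matrix power).\<close>
fun matpow :: "real^'n^'n \<Rightarrow> nat \<Rightarrow> real^'n^'n" where
  "matpow S 0 = mat 1"
| "matpow S (Suc t) = S ** matpow S t"

definition eigvals :: "real^'n^'n \<Rightarrow> real set" where
  "eigvals S = {\<mu>. \<exists>v. v \<noteq> 0 \<and> S *v v = \<mu> *\<^sub>R v}"

definition rho :: "real^'n^'n \<Rightarrow> real" where
  "rho S = Max (eigvals S)"

definition smin_nz :: "real^'n^'n \<Rightarrow> real" where
  "smin_nz S = Min (eigvals S - {0})"

definition incidence :: "('e \<Rightarrow> 'n \<times> 'n) \<Rightarrow> real^'n^'e" where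
  "incidence ends = (\<chi> e i. if i = fst (ends e) then 1 else if i = snd (ends e) then -1 else 0)"

definition adj :: "('e \<Rightarrow> 'n \<times> 'n) \<Rightarrow> 'n \<Rightarrow> 'n \<Rightarrow> bool" where
  "adj ends i j \<longleftrightarrow> (\<exists>e. ends e = (i, j) \<or> ends e = (j, i))"

definition simple_connected_graph :: "('e \<Rightarrow> 'n \<times> 'n) \<Rightarrow> bool" where
  "simple_connected_graph ends \<longleftrightarrow>
     (\<forall>e. fst (ends e) \<noteq> snd (ends e)) \<and>
     (\<forall>e e'. {fst (ends e), snd (ends e)} = {fst (ends e'), snd (ends e')} \<longrightarrow> e = e') \<and>
     (\<forall>i j. (adj ends)\<^sup>*\<^sup>* i j)"

definition gradf :: "('n \<Rightarrow> real \<Rightarrow> real) \<Rightarrow> real^'n \<Rightarrow> real^'n" where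
  "gradf fd x = (\<chi> i. fd i (x $ i))"

definition fsum :: "('n::finite \<Rightarrow> real \<Rightarrow> real) \<Rightarrow> real^'n \<Rightarrow> real" where
  "fsum f x = (\<Sum>i\<in>UNIV. f i (x $ i))"

definition inner_step :: "real \<Rightarrow> real^'n^'e \<Rightarrow> real^'n^'n \<Rightarrow> real^'n \<Rightarrow> real^'e \<Rightarrow> real^'n \<Rightarrow> real^'n" where
  "inner_step \<alpha> A B g l z = z - \<alpha> *\<^sub>R g - \<alpha> *\<^sub>R (transpose A *v l) - \<alpha> *\<^sub>R (B *v z)"

end

theory Submission
  imports Defs
begin

lemma rayleigh_min:
  fixes s :: "'a::euclidean_space \<Rightarrow> 'a" and V :: "'a set"
  assumes lin: "linear s" and sym: "\<forall>u v. s u \<bullet> v = u \<bullet> s v"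
    and sub: "subspace V" and inv: "\<forall>v\<in>V. s v \<in> V" and ne: "\<exists>v\<in>V. v \<noteq> 0"
  shows "\<exists>u \<mu>. u \<in> V \<and> u \<noteq> 0 \<and> s u = \<mu> *\<^sub>R u \<and> (\<forall>y\<in>V. \<mu> * (y \<bullet> y) \<le> y \<bullet> s y)"
proof -
  let ?K = "V \<inter> sphere 0 1"
  have cK: "compact ?K"
    using closed_subspace[OF sub] compact_sphere by (metis Int_commute compact_Int_closed)
  obtain v where v: "v \<in> V" "v \<noteq> 0" using ne by blast
  have "(1 / norm v) *\<^sub>R v \<in> ?K" using v sub by (simp add: subspace_scale)
  hence neK: "?K \<noteq> {}" by blast
  have bl: "bounded_linear s" using lin linear_conv_bounded_linear by blast
  have cont: "continuous_on ?K (\<lambda>y. y \<bullet> s y)"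
    by (intro continuous_intros bounded_linear.continuous_on[OF bl])
  obtain u where u: "u \<in> ?K" and umin: "\<forall>y\<in>?K. u \<bullet> s u \<le> y \<bullet> s y"
    using continuous_attains_inf[OF cK neK cont] by blast
  define \<mu> where "\<mu> = u \<bullet> s u"
  have uV: "u \<in> V" and un: "norm u = 1" using u by auto
  have uu: "u \<bullet> u = 1" using un by (simp add: dot_square_norm)
  have bound: "\<mu> * (y \<bullet> y) \<le> y \<bullet> s y" if yV: "y \<in> V" for y
  proof (cases "y = 0")
    case True then show ?thesis by (simp add: linear_0[OF lin])
  next
    case False
    define c where "c = 1 / norm y"
    have n1: "norm (c *\<^sub>R y) = 1" using False by (simp add: c_def)
    have cV: "c *\<^sub>R y \<in> V" using yV sub subspace_scale by blast
    have cy: "c *\<^sub>R y \<in> ?K" using n1 cV by simp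
    have "\<mu> \<le> (c *\<^sub>R y) \<bullet> s (c *\<^sub>R y)" using umin cy \<mu>_def by blast
    also have "\<dots> = (c * c) * (y \<bullet> s y)" by (simp add: linear_scale[OF lin])
    finally have h1: "\<mu> \<le> (c * c) * (y \<bullet> s y)" .
    have yy: "0 \<le> y \<bullet> y" by simp
    have cc: "(c * c) * (y \<bullet> y) = 1"
      using False by (simp add: c_def dot_square_norm power2_eq_square)
    have "\<mu> * (y \<bullet> y) \<le> ((c * c) * (y \<bullet> s y)) * (y \<bullet> y)"
      using mult_right_mono[OF h1 yy] .
    also have "\<dots> = ((c * c) * (y \<bullet> y)) * (y \<bullet> s y)" by simp
    also have "\<dots> = y \<bullet> s y" using cc by simp
    finally show ?thesis .
  qed
  define r where "r = s u - \<mu> *\<^sub>R u"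
  have rV: "r \<in> V" using inv uV sub by (simp add: r_def subspace_diff subspace_scale)
  define q where "q = r \<bullet> s r - \<mu> * (r \<bullet> r)"
  have q0: "0 \<le> q" using bound[OF rV] q_def by simp
  have expand: "0 \<le> 2 * t * (r \<bullet> r) + t^2 * q" for t
  proof -
    have "u + t *\<^sub>R r \<in> V" using uV rV sub by (simp add: subspace_add subspace_scale)
    hence "\<mu> * ((u + t *\<^sub>R r) \<bullet> (u + t *\<^sub>R r)) \<le> (u + t *\<^sub>R r) \<bullet> s (u + t *\<^sub>R r)" by (rule bound)
    moreover have "(u + t *\<^sub>R r) \<bullet> s (u + t *\<^sub>R r) = u \<bullet> s u + 2 * t * (r \<bullet> s u) + t^2 * (r \<bullet> s r)"
    proof -
      have e1: "u \<bullet> s r = r \<bullet> s u" using sym by (metis inner_commute)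
      have "s (u + t *\<^sub>R r) = s u + t *\<^sub>R s r" by (simp add: linear_add[OF lin] linear_scale[OF lin])
      hence "(u + t *\<^sub>R r) \<bullet> s (u + t *\<^sub>R r) = u \<bullet> s u + t * (u \<bullet> s r) + t * (r \<bullet> s u) + t * t * (r \<bullet> s r)"
        by (simp add: inner_add_left inner_add_right distrib_left)
      thus ?thesis using e1 by (simp add: power2_eq_square)
    qed
    moreover have "(u + t *\<^sub>R r) \<bullet> (u + t *\<^sub>R r) = u \<bullet> u + 2 * t * (r \<bullet> u) + t^2 * (r \<bullet> r)"
    proof -
      have "(u + t *\<^sub>R r) \<bullet> (u + t *\<^sub>R r) = u \<bullet> u + t * (u \<bullet> r) + t * (r \<bullet> u) + t * t * (r \<bullet> r)"
        by (simp add: inner_add_left inner_add_right distrib_left)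
      thus ?thesis by (simp add: power2_eq_square inner_commute[of u r])
    qed
    moreover have "r \<bullet> s u - \<mu> * (r \<bullet> u) = r \<bullet> r"
      by (simp add: r_def inner_diff_right)
    ultimately have "\<mu> * (u \<bullet> u + 2 * t * (r \<bullet> u) + t\<^sup>2 * (r \<bullet> r)) \<le> u \<bullet> s u + 2 * t * (r \<bullet> s u) + t\<^sup>2 * (r \<bullet> s r)"
      and "r \<bullet> s u = r \<bullet> r + \<mu> * (r \<bullet> u)" by auto
    moreover have "r \<bullet> s r = q + \<mu> * (r \<bullet> r)" by (simp add: q_def)
    moreover have "u \<bullet> s u = \<mu>" by (simp add: \<mu>_def)
    ultimately show ?thesis using uu by (simp add: algebra_simps)
  qed
  have "r \<bullet> r = 0"
  proof (rule ccontr)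
    assume "r \<bullet> r \<noteq> 0"
    hence cp: "0 < r \<bullet> r" by (simp add: inner_gt_zero_iff)
    define c where "c = r \<bullet> r"
    define t where "t = - c / (q + 1)"
    have Q: "q + 1 > 0" using q0 by simp
    have ht: "t * (q + 1) = - c" using Q by (simp add: t_def)
    have tn: "t < 0" using cp Q by (simp add: t_def c_def divide_neg_pos)
    have "(q + 1) * (2 * t * c + t^2 * q) = 2 * t * c * (q + 1) + t * q * (t * (q + 1))"
      by (simp add: algebra_simps power2_eq_square)
    also have "\<dots> = t * c * (q + 2)" unfolding ht by (simp add: algebra_simps)
    finally have eq: "(q + 1) * (2 * t * c + t^2 * q) = t * c * (q + 2)" .
    have "0 \<le> (q + 1) * (2 * t * c + t^2 * q)" using expand[of t] Q c_def by simp
    moreover have "t * c * (q + 2) < 0"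
      using tn cp q0 c_def by (simp add: mult_neg_pos)
    ultimately show False using eq by simp
  qed
  hence "s u = \<mu> *\<^sub>R u" by (simp add: r_def)
  moreover have "u \<noteq> 0" using un by auto
  ultimately show ?thesis using uV bound by blast
qed

lemma eig_finite:
  fixes S :: "real^'n^'n"
  assumes sym: "\<forall>u v. (S *v u) \<bullet> v = u \<bullet> (S *v v)"
  shows "finite (eigvals S)"
proof -
  define ev where "ev \<mu> = (SOME v. v \<noteq> 0 \<and> S *v v = \<mu> *\<^sub>R v)" for \<mu>
  have evp: "ev \<mu> \<noteq> 0 \<and> S *v ev \<mu> = \<mu> *\<^sub>R ev \<mu>" if "\<mu> \<in> eigvals S" for \<mu>
    using that unfolding eigvals_def ev_def by (metis (mono_tags, lifting) mem_Collect_eq someI_ex)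
  have orth: "ev \<mu> \<bullet> ev \<nu> = 0" if "\<mu> \<in> eigvals S" "\<nu> \<in> eigvals S" "\<mu> \<noteq> \<nu>" for \<mu> \<nu>
  proof -
    have "\<mu> * (ev \<mu> \<bullet> ev \<nu>) = (S *v ev \<mu>) \<bullet> ev \<nu>" using evp[OF that(1)] by simp
    also have "\<dots> = ev \<mu> \<bullet> (S *v ev \<nu>)" using sym by blast
    also have "\<dots> = \<nu> * (ev \<mu> \<bullet> ev \<nu>)" using evp[OF that(2)] by simp
    finally show ?thesis using that(3) by simp
  qed
  have inj: "inj_on ev (eigvals S)"
  proof (rule inj_onI)
    fix \<mu> \<nu> assume h: "\<mu> \<in> eigvals S" "\<nu> \<in> eigvals S" "ev \<mu> = ev \<nu>"
    show "\<mu> = \<nu>"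
    proof (rule ccontr)
      assume "\<mu> \<noteq> \<nu>"
      hence "ev \<mu> \<bullet> ev \<mu> = 0" using orth h by metis
      thus False using evp[OF h(1)] by simp
    qed
  qed
  have "pairwise orthogonal (ev ` eigvals S)"
    unfolding pairwise_def orthogonal_def using orth by (metis imageE)
  moreover have "0 \<notin> ev ` eigvals S" using evp by auto
  ultimately have "independent (ev ` eigvals S)" by (rule pairwise_orthogonal_independent)
  hence "finite (ev ` eigvals S)" using independent_bound by blast
  thus ?thesis using inj finite_imageD by blast
qed

lemma rho_props:
  fixes S :: "real^'n^'n"
  assumes sym: "\<forall>u v. (S *v u) \<bullet> v = u \<bullet> (S *v v)"
  shows "rho S \<in> eigvals S \<and> (\<forall>y. y \<bullet> (S *v y) \<le> rho S * (y \<bullet> y))"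
proof -
  have lin: "linear (\<lambda>u. - (S *v u))" by (simp add: linear_compose_neg)
  have sym': "\<forall>u v. (- (S *v u)) \<bullet> v = u \<bullet> (- (S *v v))" using sym by simp
  have ne: "\<exists>v\<in>(UNIV::(real^'n) set). v \<noteq> 0"
    by (metis UNIV_I zero_neq_one axis_nth axis_def vec_eq_iff zero_index)
  obtain u \<mu> where u: "u \<noteq> 0" "- (S *v u) = \<mu> *\<^sub>R u" and b: "\<forall>y. \<mu> * (y \<bullet> y) \<le> y \<bullet> (- (S *v y))"
    using rayleigh_min[OF lin sym' subspace_UNIV _ ne] by auto
  have ev: "-\<mu> \<in> eigvals S" unfolding eigvals_def using u
    by (auto intro!: exI[of _ u] simp: minus_equation_iff[of "S *v u"])
  have le: "\<nu> \<le> -\<mu>" if "\<nu> \<in> eigvals S" for \<nu>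
  proof -
    have "\<exists>v. v \<noteq> 0 \<and> S *v v = \<nu> *\<^sub>R v" using that by (simp add: eigvals_def)
    then obtain v where v: "v \<noteq> 0" "S *v v = \<nu> *\<^sub>R v" by blast
    have "\<mu> * (v \<bullet> v) \<le> - (\<nu> * (v \<bullet> v))" using b[rule_format, of v] v by simp
    moreover have "0 < v \<bullet> v" using v by simp
    ultimately have "(\<mu> + \<nu>) * (v \<bullet> v) \<le> 0" "0 < v \<bullet> v" by (simp_all add: algebra_simps)
    hence "\<mu> + \<nu> \<le> 0" by (simp add: mult_le_0_iff)
    thus ?thesis by linarith
  qed
  have "rho S = -\<mu>" unfolding rho_def
    by (rule Max_eqI[OF eig_finite[OF sym]]) (use le ev in auto)
  moreover have "\<forall>y. y \<bullet> (S *v y) \<le> -\<mu> * (y \<bullet> y)"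
  proof
    fix y
    have "\<mu> * (y \<bullet> y) \<le> - (y \<bullet> (S *v y))" using b by (simp add: inner_minus_right)
    thus "y \<bullet> (S *v y) \<le> -\<mu> * (y \<bullet> y)" by linarith
  qed
  ultimately show ?thesis using ev by simp
qed

lemma psd_norm_bound:
  fixes S :: "real^'n^'n"
  assumes sym: "\<forall>u v. (S *v u) \<bullet> v = u \<bullet> (S *v v)" and psd: "\<forall>v. 0 \<le> v \<bullet> (S *v v)"
  shows "(norm (S *v z))^2 \<le> (rho S)^2 * (norm z)^2"
proof -
  have sym2: "\<forall>u v. ((S ** S) *v u) \<bullet> v = u \<bullet> ((S ** S) *v v)"
    using sym by (simp add: matrix_vector_mul_assoc[symmetric])
  define \<sigma> where "\<sigma> = rho (S ** S)"
  have P: "\<sigma> \<in> eigvals (S ** S)" "\<forall>y. y \<bullet> ((S ** S) *v y) \<le> \<sigma> * (y \<bullet> y)"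
    using rho_props[OF sym2] \<sigma>_def by auto
  have sq: "y \<bullet> ((S ** S) *v y) = (norm (S *v y))^2" for y
    using sym by (simp add: matrix_vector_mul_assoc[symmetric] power2_norm_eq_inner)
  obtain v where v: "v \<noteq> 0" "(S ** S) *v v = \<sigma> *\<^sub>R v" using P(1) unfolding eigvals_def by blast
  have vv: "0 < v \<bullet> v" using v by simp
  have s0: "0 \<le> \<sigma>"
  proof -
    have "\<sigma> * (v \<bullet> v) = (norm (S *v v))^2" using sq[of v] v by simp
    hence "0 \<le> \<sigma> * (v \<bullet> v)" by simp
    thus ?thesis using vv by (simp add: zero_le_mult_iff)
  qed
  define r where "r = sqrt \<sigma>"
  have r0: "0 \<le> r" and rr: "r * r = \<sigma>" using s0 by (auto simp: r_def)
  have rS: "r \<le> rho S"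
  proof -
    define w where "w = S *v v + r *\<^sub>R v"
    have Sw: "S *v w = r *\<^sub>R w"
      unfolding w_def using v rr by (simp add: matrix_vector_right_distrib matrix_vector_mult_scaleR
          matrix_vector_mul_assoc algebra_simps)
    show ?thesis
    proof (cases "w = 0")
      case False
      have "r * (w \<bullet> w) = w \<bullet> (S *v w)" using Sw by simp
      also have "\<dots> \<le> rho S * (w \<bullet> w)" using rho_props[OF sym] by blast
      finally show ?thesis using False by (intro mult_right_le_imp_le[of r "w \<bullet> w"]) auto
    next
      case True
      hence "S *v v = - r *\<^sub>R v" by (simp add: w_def eq_neg_iff_add_eq_0)
      hence "0 \<le> - r * (v \<bullet> v)" using psd[rule_format, of v] by simp
      hence "r * (v \<bullet> v) \<le> 0" by simp
      hence "r \<le> 0" using vv by (simp add: mult_le_0_iff)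
      hence "r = 0" using r0 by simp
      moreover have "0 \<le> rho S"
      proof -
        have "0 \<le> v \<bullet> (S *v v)" using psd by blast
        also have "\<dots> \<le> rho S * (v \<bullet> v)" using rho_props[OF sym] by blast
        finally show ?thesis using vv by (simp add: zero_le_mult_iff)
      qed
      ultimately show ?thesis by simp
    qed
  qed
  have "(norm (S *v z))^2 \<le> \<sigma> * (z \<bullet> z)" using P(2) sq by metis
  also have "\<dots> \<le> (rho S)^2 * (z \<bullet> z)"
  proof (rule mult_right_mono)
    show "\<sigma> \<le> (rho S)^2" using rr rS r0 by (metis mult_mono power2_eq_square order_trans order_refl)
  qed simp
  finally show ?thesis by (simp add: power2_norm_eq_inner)
qed

lemma adj_transpose: "(A *v z) \<bullet> y = z \<bullet> (transpose A *v (y::real^'m))"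
  for A :: "real^'n^'m"
  by (metis dot_lmul_matrix inner_commute transpose_matrix_vector)

lemma smin_props:
  fixes A :: "real^'n^'e"
  assumes ne: "\<exists>w. A *v w \<noteq> 0"
  shows "0 < smin_nz (A ** transpose A) \<and>
    (\<forall>w. smin_nz (A ** transpose A) * ((A *v w) \<bullet> (A *v w)) \<le> (norm (transpose A *v (A *v w)))^2)"
proof -
  define S where "S = A ** transpose A"
  have Sv: "S *v y = A *v (transpose A *v y)" for y by (simp only: S_def matrix_vector_mul_assoc)
  have quad: "y \<bullet> (S *v y) = (norm (transpose A *v y))^2" for y
    unfolding Sv by (simp add: power2_norm_eq_inner adj_transpose inner_commute[of y])
  have sym: "\<forall>u v. (S *v u) \<bullet> v = u \<bullet> (S *v v)"
    unfolding Sv by (metis adj_transpose inner_commute)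
  define V where "V = range (\<lambda>w. A *v w)"
  have sub: "subspace V" unfolding V_def
    by (rule linear_subspace_image[OF matrix_vector_mul_linear subspace_UNIV])
  have inv: "\<forall>v\<in>V. S *v v \<in> V" unfolding V_def Sv by blast
  have neV: "\<exists>v\<in>V. v \<noteq> 0" using ne unfolding V_def by blast
  obtain u \<mu> where u: "u \<in> V" "u \<noteq> 0" "S *v u = \<mu> *\<^sub>R u" and b: "\<forall>y\<in>V. \<mu> * (y \<bullet> y) \<le> y \<bullet> (S *v y)"
    using rayleigh_min[of "\<lambda>u. S *v u" V] sym sub inv neV by auto
  have mu0: "\<mu> \<noteq> 0"
  proof
    assume "\<mu> = 0"
    hence "(norm (transpose A *v u))^2 = 0" using quad[of u] u by simp
    hence t0: "transpose A *v u = 0" by simp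
    obtain w where "u = A *v w" using u(1) V_def by blast
    hence "u \<bullet> u = w \<bullet> (transpose A *v u)" by (simp add: adj_transpose)
    thus False using t0 u(2) by simp
  qed
  have muE: "\<mu> \<in> eigvals S - {0}" using u mu0 unfolding eigvals_def by auto
  have fin: "finite (eigvals S - {0})" using eig_finite[OF sym] by simp
  have pos: "0 < \<nu>" if "\<nu> \<in> eigvals S - {0}" for \<nu>
  proof -
    have "\<exists>v. v \<noteq> 0 \<and> S *v v = \<nu> *\<^sub>R v" using that by (simp add: eigvals_def)
    then obtain v where v: "v \<noteq> 0" "S *v v = \<nu> *\<^sub>R v" by blast
    have "0 \<le> v \<bullet> (S *v v)" using quad by simp
    hence "0 \<le> \<nu> * (v \<bullet> v)" using v by simp
    moreover have "0 < v \<bullet> v" using v by simp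
    ultimately have "0 \<le> \<nu>" by (simp add: zero_le_mult_iff)
    thus ?thesis using that by simp
  qed
  have ne2: "eigvals S - {0} \<noteq> {}" using muE by blast
  have smin_pos: "0 < smin_nz S" unfolding smin_nz_def using Min_in[OF fin ne2] pos by blast
  have smin_le: "smin_nz S \<le> \<mu>" unfolding smin_nz_def using Min_le[OF fin muE] .
  have "smin_nz S * ((A *v w) \<bullet> (A *v w)) \<le> (norm (transpose A *v (A *v w)))^2" for w
  proof -
    have "A *v w \<in> V" unfolding V_def by blast
    hence "\<mu> * ((A *v w) \<bullet> (A *v w)) \<le> (norm (transpose A *v (A *v w)))^2" using b quad by metis
    moreover have "smin_nz S * ((A *v w) \<bullet> (A *v w)) \<le> \<mu> * ((A *v w) \<bullet> (A *v w))"
      using smin_le by (simp add: mult_right_mono)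
    ultimately show ?thesis by linarith
  qed
  thus ?thesis using smin_pos S_def by blast
qed

lemma matpow_Suc_vec: "matpow W (Suc t) *v z = W *v (matpow W t *v z)"
  by (simp add: matrix_vector_mul_assoc)

lemma matpow_0_vec: "matpow W 0 *v z = z" by simp

lemma matpow_comm: "matpow W t *v (W *v z) = W *v (matpow W t *v z)"
proof (induction t arbitrary: z)
  case 0 then show ?case by (simp only: matpow_0_vec)
next
  case (Suc t) then show ?case by (simp only: matpow_Suc_vec)
qed

lemma matpow_add: "matpow W (a + b) *v z = matpow W a *v (matpow W b *v z)"
proof (induction a arbitrary: z)
  case 0 then show ?case by (simp only: matpow_0_vec add_0)
next
  case (Suc a) then show ?case by (simp only: matpow_Suc_vec add_Suc)
qed

lemma matpow_sym:
  assumes sym: "\<forall>u v. (W *v u) \<bullet> v = u \<bullet> (W *v v)"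
  shows "(matpow W t *v u) \<bullet> v = u \<bullet> (matpow W t *v v)"
proof (induction t arbitrary: u v)
  case 0 then show ?case by simp
next
  case (Suc t)
  have "(matpow W (Suc t) *v u) \<bullet> v = (matpow W t *v u) \<bullet> (W *v v)"
    using sym by (simp only: matpow_Suc_vec)
  also have "\<dots> = u \<bullet> (matpow W t *v (W *v v))" using Suc by blast
  also have "\<dots> = u \<bullet> (matpow W (Suc t) *v v)" by (simp only: matpow_comm matpow_Suc_vec)
  finally show ?case .
qed

lemma matpow_psd:
  assumes sym: "\<forall>u v. (W *v u) \<bullet> v = u \<bullet> (W *v v)" and psd: "\<forall>v. 0 \<le> v \<bullet> (W *v v)"
  shows "0 \<le> v \<bullet> (matpow W t *v v)"
proof -
  have "\<forall>v. 0 \<le> v \<bullet> (matpow W t *v v) \<and> 0 \<le> v \<bullet> (matpow W (Suc t) *v v)"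
  proof (induction t)
    case 0 then show ?case using psd by simp
  next
    case (Suc t)
    have "0 \<le> v \<bullet> (matpow W (Suc (Suc t)) *v v)" for v
    proof -
      have "v \<bullet> (matpow W (Suc (Suc t)) *v v) = v \<bullet> (W *v (matpow W t *v (W *v v)))"
        by (simp only: matpow_Suc_vec matpow_comm)
      also have "\<dots> = (W *v v) \<bullet> (matpow W t *v (W *v v))" using sym by (metis inner_commute)
      finally show ?thesis using Suc by simp
    qed
    thus ?case using Suc by blast
  qed
  thus ?thesis by blast
qed

lemma sum_mv: "finite I \<Longrightarrow> (\<Sum>t\<in>I. F t) *v z = (\<Sum>t\<in>I. F t *v (z::real^'n))"
  for F :: "nat \<Rightarrow> real^'n^'m"
  by (induction I rule: finite_induct) (simp_all add: matrix_vector_mult_add_rdistrib)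

lemma mv_sum: "finite I \<Longrightarrow> (W::real^'n^'m) *v (\<Sum>t\<in>I. g t) = (\<Sum>t\<in>I. W *v g t)"
  by (induction I rule: finite_induct) (simp_all add: matrix_vector_right_distrib)

lemma inner_iter:
  "(inner_step \<alpha> A B g l ^^ t) z =
     matpow (mat 1 - \<alpha> *\<^sub>R B) t *v z - \<alpha> *\<^sub>R (\<Sum>s<t. matpow (mat 1 - \<alpha> *\<^sub>R B) s *v (g + transpose A *v l))"
proof (induction t)
  case 0 then show ?case by simp
next
  case (Suc t)
  define W where "W = mat 1 - \<alpha> *\<^sub>R B"
  define q where "q = g + transpose A *v l"
  have step: "inner_step \<alpha> A B g l y = W *v y - \<alpha> *\<^sub>R q" for y
    by (simp add: inner_step_def W_def q_def matrix_vector_mult_diff_rdistrib scaleR_matrix_vector_assoc[symmetric] algebra_simps)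
  have "(inner_step \<alpha> A B g l ^^ Suc t) z = inner_step \<alpha> A B g l ((inner_step \<alpha> A B g l ^^ t) z)" by simp
  also have "\<dots> = W *v ((inner_step \<alpha> A B g l ^^ t) z) - \<alpha> *\<^sub>R q" by (rule step)
  also have "\<dots> = W *v (matpow W t *v z - \<alpha> *\<^sub>R (\<Sum>s<t. matpow W s *v q)) - \<alpha> *\<^sub>R q"
    by (simp only: W_def q_def Suc.IH)
  also have "\<dots> = matpow W (Suc t) *v z - \<alpha> *\<^sub>R (\<Sum>s<Suc t. matpow W s *v q)"
  proof -
    have "(\<Sum>s<Suc t. matpow W s *v q) = q + (\<Sum>s<t. W *v (matpow W s *v q))"
      by (simp only: sum.lessThan_Suc_shift matpow_0_vec matpow_Suc_vec)
    thus ?thesis by (simp add: matrix_vector_mult_diff_distrib matrix_vector_mult_scaleR mv_sum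
          matpow_Suc_vec algebra_simps del: matpow.simps)
  qed
  finally show ?case by (simp add: W_def q_def del: matpow.simps)
qed

lemma lip1:
  assumes d2: "\<forall>t. (h has_real_derivative h' t) (at t)" and bnd: "\<forall>t. \<bar>h' t\<bar> \<le> L"
  shows "\<bar>h s - h t\<bar> \<le> L * \<bar>s - t\<bar>"
proof -
  have key: "\<bar>h b - h a\<bar> \<le> L * \<bar>b - a\<bar>" if "a < b" for a b
  proof -
    have "\<exists>z>a. z < b \<and> h b - h a = (b - a) * h' z" by (rule MVT2[OF that]) (use d2 in blast)
    then obtain z where "h b - h a = (b - a) * h' z" by blast
    hence "\<bar>h b - h a\<bar> = \<bar>b - a\<bar> * \<bar>h' z\<bar>" by (simp add: abs_mult)
    also have "\<dots> \<le> \<bar>b - a\<bar> * L" using bnd by (simp add: mult_left_mono)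
    finally show ?thesis by (simp add: mult.commute)
  qed
  show ?thesis
  proof (cases s t rule: linorder_cases)
    case less then show ?thesis using key[OF less] by (simp add: abs_minus_commute)
  next
    case equal then show ?thesis by simp
  next
    case greater then show ?thesis using key[OF greater] by simp
  qed
qed

lemma norm_sq_vec: "(norm (x::real^'n))^2 = (\<Sum>i\<in>UNIV. (x$i)^2)"
  unfolding power2_norm_eq_inner inner_vec_def by (simp add: power2_eq_square)

lemma grad_lip:
  assumes d2: "\<forall>i t. (fd i has_real_derivative fdd i t) (at t)" and bnd: "\<forall>i t. \<bar>fdd i t\<bar> \<le> L"
  shows "(norm (gradf fd a - gradf fd b))^2 \<le> L^2 * (norm (a - b))^2"
proof -
  have c: "(fd i (a$i) - fd i (b$i))^2 \<le> L^2 * (a$i - b$i)^2" for i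
  proof -
    have h: "\<bar>fd i (a$i) - fd i (b$i)\<bar> \<le> L * \<bar>a$i - b$i\<bar>"
      using lip1[of "fd i" "fdd i" L] d2 bnd by blast
    have "\<bar>fd i (a$i) - fd i (b$i)\<bar>^2 \<le> (L * \<bar>a$i - b$i\<bar>)^2"
      by (rule power_mono[OF h]) simp
    thus ?thesis by (simp add: power_mult_distrib)
  qed
  have "(norm (gradf fd a - gradf fd b))^2 = (\<Sum>i\<in>UNIV. (fd i (a$i) - fd i (b$i))^2)"
    by (simp add: norm_sq_vec gradf_def)
  also have "\<dots> \<le> (\<Sum>i\<in>UNIV. L^2 * (a$i - b$i)^2)" by (rule sum_mono) (rule c)
  also have "\<dots> = L^2 * (norm (a - b))^2" by (simp add: norm_sq_vec sum_distrib_left)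
  finally show ?thesis .
qed

lemma sq_split:
  fixes a b :: "'a::real_inner"
  assumes d: "1 < d"
  shows "(norm (a + b))^2 \<le> d * (norm a)^2 + d / (d - 1) * (norm b)^2"
proof -
  have "(norm (a + b))^2 \<le> (norm a + norm b)^2"
    by (rule power_mono[OF norm_triangle_ineq]) simp
  also have "\<dots> \<le> d * (norm a)^2 + d / (d - 1) * (norm b)^2"
  proof -
    define x where "x = norm a" define y where "y = norm b"
    have "0 \<le> ((d - 1) * x - y)^2" by simp
    hence "(d - 1) * (x + y)^2 \<le> (d - 1) * (d * x^2) + d * y^2"
      by (simp add: power2_eq_square algebra_simps)
    hence i1: "(d - 1) * (x + y)^2 \<le> (d - 1) * (d * x^2) + d * y^2" .
    have dp: "0 < d - 1" using d by simp
    have "(x + y)^2 \<le> ((d - 1) * (d * x^2) + d * y^2) / (d - 1)"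
      using i1 dp by (simp add: le_divide_eq mult.commute)
    also have "\<dots> = d * x^2 + d / (d - 1) * y^2" using dp by (simp add: field_simps)
    finally show ?thesis by (simp add: x_def y_def)
  qed
  finally show ?thesis .
qed

theorem lemma3p17:
  fixes ends :: "'e::finite \<Rightarrow> 'n::finite \<times> 'n"
    and A :: "real^'n^'e" and B :: "real^'n^'n"
    and f fd fdd :: "'n \<Rightarrow> real \<Rightarrow> real"
    and m L \<alpha> \<beta> :: real and T :: nat
    and xs :: "real^'n" and ls :: "real^'e"
    and x :: "nat \<Rightarrow> real^'n" and lam :: "nat \<Rightarrow> real^'e"
    and C M N :: "real^'n^'n"
    and dt gt et :: real and k :: nat
  assumes graph: "simple_connected_graph ends"
    and A_def: "A = incidence ends"
    and B_sym: "transpose B = B"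
    and B_psd: "\<forall>v. 0 \<le> v \<bullet> (B *v v)"
    and B_null: "\<forall>v. B *v v = 0 \<longleftrightarrow> A *v v = 0"
    and B_sparse: "\<forall>i j. i \<noteq> j \<and> B $ i $ j \<noteq> 0 \<longrightarrow> adj ends i j"
    and f_d1: "\<forall>i t. (f i has_real_derivative fd i t) (at t)"
    and f_d2: "\<forall>i t. (fd i has_real_derivative fdd i t) (at t)"
    and mpos: "0 < m" and mL: "m \<le> L"
    and fdd_bnd: "\<forall>i t. m \<le> fdd i t \<and> fdd i t \<le> L"
    and xs_feas: "A *v xs = 0"
    and xs_min: "\<forall>y. A *v y = 0 \<longrightarrow> fsum f xs \<le> fsum f y"
    and ls_kkt: "gradf fd xs + transpose A *v ls = 0"
    and ls_range: "\<exists>w. ls = A *v w"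
    and beta: "0 < \<beta>" and T: "1 \<le> T"
    and alpha: "0 < \<alpha>" "\<alpha> < 1 / rho B"
    and lam0: "lam 0 = 0"
    and x_step: "\<forall>j. x (Suc j) = (inner_step \<alpha> A B (gradf fd (x j)) (lam j) ^^ T) (x j)"
    and lam_step: "\<forall>j. lam (Suc j) = lam j + \<beta> *\<^sub>R (A *v x (Suc j))"
    and C_def: "C = (\<Sum>t<T. matpow (mat 1 - \<alpha> *\<^sub>R B) t)"
    and M_def: "M = matrix_inv C ** matpow (mat 1 - \<alpha> *\<^sub>R B) T"
    and N_def: "N = (1 / \<alpha>) *\<^sub>R (matrix_inv C - M)"
    and dt: "1 < dt" and gt: "1 < gt" and et: "1 < et"
  shows "(norm (lam (Suc k) - ls))\<^sup>2
    \<le> dt / (\<alpha>\<^sup>2 * smin_nz (A ** transpose A))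
        * (et / (et - 1) * (rho M)\<^sup>2 + et * \<alpha>\<^sup>2 * L\<^sup>2) * (norm (x k - x (Suc k)))\<^sup>2
      + dt / ((dt - 1) * \<alpha>\<^sup>2 * smin_nz (A ** transpose A))
        * (gt / (gt - 1) * \<alpha>\<^sup>2 * rho ((\<beta> *\<^sub>R (transpose A ** A) - N) ** (\<beta> *\<^sub>R (transpose A ** A) - N))
           + gt * \<alpha>\<^sup>2 * L\<^sup>2) * (norm (x (Suc k) - xs))\<^sup>2"
proof -
  define tA where "tA = (\<lambda>y. transpose A *v y)"
  have tA_add: "tA (a + b) = tA a + tA b" for a b unfolding tA_def by (rule matrix_vector_right_distrib)
  have tA_diff: "tA (a - b) = tA a - tA b" for a b unfolding tA_def by (rule matrix_vector_mult_diff_distrib)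
  have tA_scale: "tA (c *\<^sub>R a) = c *\<^sub>R tA a" for a c unfolding tA_def by (rule matrix_vector_mult_scaleR)
  have tA_adj: "(A *v z) \<bullet> y = z \<bullet> tA y" for z y unfolding tA_def by (rule adj_transpose)
  define W where "W = mat 1 - \<alpha> *\<^sub>R B"
  define P where "P = matpow W"
  define Ci where "Ci = matrix_inv C"
  have Bsym: "\<forall>u v. (B *v u) \<bullet> v = u \<bullet> (B *v v)"
    using adj_transpose[of B] B_sym by metis
  have rB: "rho B \<in> eigvals B \<and> (\<forall>y. y \<bullet> (B *v y) \<le> rho B * (y \<bullet> y))" by (rule rho_props[OF Bsym])
  have rBpos: "0 < rho B"
  proof (rule ccontr)
    assume "\<not> 0 < rho B"
    hence "1 / rho B \<le> 0" by (simp add: divide_nonpos_nonneg)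
    thus False using alpha by linarith
  qed
  have arB: "\<alpha> * rho B < 1" using alpha rBpos by (simp add: less_divide_eq)
  have Wv: "W *v z = z - \<alpha> *\<^sub>R (B *v z)" for z
    by (simp add: W_def matrix_vector_mult_diff_rdistrib scaleR_matrix_vector_assoc[symmetric])
  have Wsym: "\<forall>u v. (W *v u) \<bullet> v = u \<bullet> (W *v v)"
    using Bsym by (simp add: Wv inner_diff_left inner_diff_right inner_commute)
  have Wpsd: "\<forall>v. 0 \<le> v \<bullet> (W *v v)"
  proof
    fix v
    have "v \<bullet> (B *v v) \<le> rho B * (v \<bullet> v)" using rB by blast
    hence "\<alpha> * (v \<bullet> (B *v v)) \<le> \<alpha> * (rho B * (v \<bullet> v))" using alpha by (simp add: mult_left_mono)
    moreover have "\<alpha> * (rho B * (v \<bullet> v)) \<le> v \<bullet> v"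
      using arB mult_right_mono[of "\<alpha> * rho B" 1 "v \<bullet> v"] by simp
    ultimately show "0 \<le> v \<bullet> (W *v v)" by (simp add: Wv inner_diff_right)
  qed
  have Psym: "(P t *v u) \<bullet> v = u \<bullet> (P t *v v)" for t u v
    unfolding P_def by (rule matpow_sym[OF Wsym])
  have Ppsd: "0 \<le> v \<bullet> (P t *v v)" for t v
    unfolding P_def by (rule matpow_psd[OF Wsym Wpsd])
  have Padd: "P (a + b) *v z = P a *v (P b *v z)" for a b z unfolding P_def by (rule matpow_add)
  have Cv: "C *v z = (\<Sum>t<T. P t *v z)" for z
    by (simp add: C_def P_def W_def sum_mv)
  have Csym: "(C *v u) \<bullet> v = u \<bullet> (C *v v)" for u v
    by (simp add: Cv inner_sum_left inner_sum_right Psym)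
  have Cpos: "u \<bullet> u \<le> u \<bullet> (C *v u)" for u
  proof -
    have "u \<bullet> (C *v u) = (\<Sum>t<T. u \<bullet> (P t *v u))" by (simp add: Cv inner_sum_right)
    moreover have "u \<bullet> (P 0 *v u) \<le> (\<Sum>t<T. u \<bullet> (P t *v u))"
      by (rule member_le_sum) (use T Ppsd in auto)
    ultimately show ?thesis by (simp add: P_def)
  qed
  have Cinj: "\<forall>z. C *v z = 0 \<longrightarrow> z = 0"
  proof (intro allI impI)
    fix z assume "C *v z = 0"
    hence "z \<bullet> z \<le> 0" using Cpos[of z] by simp
    thus "z = 0" by (metis inner_gt_zero_iff not_le)
  qed
  obtain Cl where "Cl ** C = mat 1" using Cinj matrix_left_invertible_ker by blast
  hence "invertible C" unfolding invertible_def using matrix_left_right_inverse by blast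
  hence CiC: "Ci ** C = mat 1 \<and> C ** Ci = mat 1"
    unfolding Ci_def matrix_inv_def invertible_def by (rule someI_ex[where P = "\<lambda>A'. C ** A' = mat 1 \<and> A' ** C = mat 1", THEN conjE]) auto
  have CiCv: "Ci *v (C *v z) = z" for z using CiC by (simp add: matrix_vector_mul_assoc)
  have CCiv: "C *v (Ci *v z) = z" for z using CiC by (simp add: matrix_vector_mul_assoc)
  have Cisym: "(Ci *v u) \<bullet> v = u \<bullet> (Ci *v v)" for u v
    by (metis CCiv Csym)
  have CP: "C *v (P T *v z) = P T *v (C *v z)" for z
  proof -
    have "C *v (P T *v z) = (\<Sum>t<T. P t *v (P T *v z))" by (simp add: Cv)
    also have "\<dots> = (\<Sum>t<T. P T *v (P t *v z))" by (metis Padd add.commute)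
    also have "\<dots> = P T *v (C *v z)" by (simp add: Cv mv_sum)
    finally show ?thesis .
  qed
  have CiP: "Ci *v (P T *v z) = P T *v (Ci *v z)" for z
    by (metis CCiv CP CiCv)
  have Mv: "M *v z = Ci *v (P T *v z)" for z by (simp add: M_def Ci_def P_def W_def matrix_vector_mul_assoc)
  have Msym: "\<forall>u v. (M *v u) \<bullet> v = u \<bullet> (M *v v)"
    by (simp add: Mv Cisym Psym CiP)
  have Mpsd: "\<forall>u. 0 \<le> u \<bullet> (M *v u)"
  proof
    fix u
    define v where "v = Ci *v u"
    have u: "u = C *v v" by (simp add: v_def CCiv)
    have "u \<bullet> (M *v u) = (C *v v) \<bullet> (P T *v v)" by (simp add: Mv CiP v_def[symmetric] u[symmetric])
    also have "\<dots> = v \<bullet> (C *v (P T *v v))" by (rule Csym)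
    also have "\<dots> = (\<Sum>t<T. v \<bullet> (P t *v (P T *v v)))" by (simp add: Cv inner_sum_right)
    also have "\<dots> = (\<Sum>t<T. v \<bullet> (P (t + T) *v v))" by (simp add: Padd)
    also have "\<dots> \<ge> 0" by (rule sum_nonneg) (rule Ppsd)
    finally show "0 \<le> u \<bullet> (M *v u)" .
  qed
  have Mb: "(norm (M *v z))^2 \<le> (rho M)^2 * (norm z)^2" for z by (rule psd_norm_bound[OF Msym Mpsd])
  have Nv: "N *v z = (1/\<alpha>) *\<^sub>R (Ci *v z - M *v z)" for z
    by (simp only: N_def Ci_def scaleR_matrix_vector_assoc[symmetric] matrix_vector_mult_diff_rdistrib)
  define D where "D = \<beta> *\<^sub>R (transpose A ** A) - N"
  have Dv: "D *v z = \<beta> *\<^sub>R tA (A *v z) - N *v z" for z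
    unfolding D_def tA_def
    by (simp only: matrix_vector_mult_diff_rdistrib scaleR_matrix_vector_assoc[symmetric] matrix_vector_mul_assoc[symmetric])
  have Nsym: "(N *v u) \<bullet> v = u \<bullet> (N *v v)" for u v
    using Msym by (simp add: Nv inner_diff_left inner_diff_right Cisym)
  have AA: "(tA (A *v u)) \<bullet> v = u \<bullet> tA (A *v v)" for u v by (metis tA_adj inner_commute)
  have Dsym: "\<forall>u v. (D *v u) \<bullet> v = u \<bullet> (D *v v)"
    by (simp add: Dv inner_diff_left inner_diff_right AA Nsym)
  have DDsym: "\<forall>u v. ((D ** D) *v u) \<bullet> v = u \<bullet> ((D ** D) *v v)"
    using Dsym by (simp add: matrix_vector_mul_assoc[symmetric])
  have Db: "(norm (D *v z))^2 \<le> rho (D ** D) * (norm z)^2" for z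
  proof -
    have "(norm (D *v z))^2 = z \<bullet> ((D ** D) *v z)"
      using Dsym by (simp add: power2_norm_eq_inner matrix_vector_mul_assoc[symmetric])
    also have "\<dots> \<le> rho (D ** D) * (z \<bullet> z)" using rho_props[OF DDsym] by blast
    finally show ?thesis by (simp add: power2_norm_eq_inner)
  qed
  have Bxs: "B *v xs = 0" using B_null xs_feas by blast
  have Wxs: "W *v xs = xs" by (simp add: Wv Bxs)
  have Pxs: "P t *v xs = xs" for t
  proof (induction t)
    case 0 then show ?case by (simp only: P_def matpow_0_vec)
  next
    case (Suc t) then show ?case by (simp only: P_def matpow_Suc_vec Wxs)
  qed
  have Mxs: "M *v xs = Ci *v xs" by (simp add: Mv Pxs)
  have Nxs: "N *v xs = 0" by (simp add: Nv Mxs)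
  have Dxs: "D *v xs = 0" by (simp add: Dv Nxs xs_feas tA_def)
  have bnd: "\<forall>i t. \<bar>fdd i t\<bar> \<le> L" using fdd_bnd mpos by (smt (verit))
  have GL: "(norm (gradf fd a - gradf fd b))^2 \<le> L^2 * (norm (a - b))^2" for a b
    by (rule grad_lip[OF f_d2 bnd])
  have lamR: "\<exists>w. lam j = A *v w" for j
  proof (induction j)
    case 0 then show ?case using lam0 by (metis matrix_vector_mult_0_right)
  next
    case (Suc j)
    then obtain w where "lam j = A *v w" by blast
    hence "lam (Suc j) = A *v (w + \<beta> *\<^sub>R x (Suc j))"
      using lam_step by (simp add: matrix_vector_right_distrib matrix_vector_mult_scaleR)
    then show ?case by blast
  qed
  define q where "q = gradf fd (x k) + tA (lam k)"
  have x1eq: "x (Suc k) = P T *v x k - \<alpha> *\<^sub>R (C *v q)"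
    using x_step inner_iter[where \<alpha>=\<alpha> and A=A and B=B and g="gradf fd (x k)" and l="lam k" and t=T and z="x k"]
    by (simp add: Cv P_def W_def tA_def q_def)
  have Cix1: "Ci *v x (Suc k) = M *v x k - \<alpha> *\<^sub>R q"
    by (simp add: x1eq matrix_vector_mult_diff_distrib matrix_vector_mult_scaleR CiCv Mv)
  define e where "e = lam (Suc k) - ls"
  define gk where "gk = gradf fd (x k)"
  define g1 where "g1 = gradf fd (x (Suc k))"
  define gs where "gs = gradf fd xs"
  define \<Delta> where "\<Delta> = x k - x (Suc k)"
  define \<delta> where "\<delta> = x (Suc k) - xs"
  have lsK: "tA ls = - gs" using ls_kkt unfolding gs_def tA_def by (simp add: eq_neg_iff_add_eq_0 add.commute)
  have e1: "tA e = tA (lam k) + \<beta> *\<^sub>R tA (A *v x (Suc k)) - tA ls"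
    unfolding e_def using lam_step by (simp add: tA_add tA_diff tA_scale)
  have e2: "\<alpha> *\<^sub>R tA (lam k) = M *v x k - Ci *v x (Suc k) - \<alpha> *\<^sub>R gk"
    using Cix1 unfolding q_def gk_def by (simp add: algebra_simps)
  have e3: "\<alpha> *\<^sub>R (D *v \<delta>) = (\<alpha> * \<beta>) *\<^sub>R tA (A *v x (Suc k)) - (Ci *v x (Suc k) - M *v x (Suc k))"
  proof -
    have "D *v \<delta> = D *v x (Suc k)" by (simp add: \<delta>_def matrix_vector_mult_diff_distrib Dxs)
    moreover have "\<alpha> *\<^sub>R (D *v x (Suc k)) = \<alpha> *\<^sub>R (\<beta> *\<^sub>R tA (A *v x (Suc k))) - \<alpha> *\<^sub>R ((1/\<alpha>) *\<^sub>R (Ci *v x (Suc k) - M *v x (Suc k)))"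
      by (simp only: Dv Nv scaleR_diff_right)
    moreover have "\<dots> = (\<alpha> * \<beta>) *\<^sub>R tA (A *v x (Suc k)) - (Ci *v x (Suc k) - M *v x (Suc k))"
      using alpha by simp
    ultimately show ?thesis by simp
  qed
  have e4: "M *v \<Delta> = M *v x k - M *v x (Suc k)" by (simp add: \<Delta>_def matrix_vector_mult_diff_distrib)
  have key: "\<alpha> *\<^sub>R tA e = (M *v \<Delta> - \<alpha> *\<^sub>R (gk - g1)) + (\<alpha> *\<^sub>R (D *v \<delta>) - \<alpha> *\<^sub>R (g1 - gs))"
  proof -
    have "\<alpha> *\<^sub>R tA e = \<alpha> *\<^sub>R tA (lam k) + (\<alpha> * \<beta>) *\<^sub>R tA (A *v x (Suc k)) + \<alpha> *\<^sub>R gs"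
      by (simp add: e1 lsK algebra_simps)
    also have "\<dots> = (M *v \<Delta> - \<alpha> *\<^sub>R (gk - g1)) + (\<alpha> *\<^sub>R (D *v \<delta>) - \<alpha> *\<^sub>R (g1 - gs))"
      by (simp only: e2 e3 e4) (simp add: algebra_simps)
    finally show ?thesis .
  qed
  define s where "s = smin_nz (A ** transpose A)"
  have Ane: "\<exists>w. A *v w \<noteq> 0"
  proof (rule ccontr)
    assume "\<not> (\<exists>w. A *v w \<noteq> 0)"
    hence "A = 0" by (simp add: matrix_eq)
    moreover obtain e0 :: 'e where True by blast
    have "A $ e0 $ fst (ends e0) = 1" by (simp add: A_def incidence_def)
    ultimately show False by simp
  qed
  have sm: "0 < s \<and> (\<forall>w. s * ((A *v w) \<bullet> (A *v w)) \<le> (norm (transpose A *v (A *v w)))^2)"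
    unfolding s_def by (rule smin_props[OF Ane])
  obtain w1 where w1: "lam (Suc k) = A *v w1" using lamR by blast
  obtain w2 where w2: "ls = A *v w2" using ls_range by blast
  have ew: "e = A *v (w1 - w2)" by (simp add: e_def w1 w2 matrix_vector_mult_diff_distrib)
  have spos: "0 < s" using sm by blast
  have sE: "s * (norm e)^2 \<le> (norm (tA e))^2"
    using sm ew by (simp add: tA_def power2_norm_eq_inner)
  have nk: "(norm (\<alpha> *\<^sub>R tA e))^2 = \<alpha>^2 * (norm (tA e))^2"
    by (simp add: power_mult_distrib)
  define a1 where "a1 = M *v \<Delta>"
  define a2 where "a2 = \<alpha> *\<^sub>R (gk - g1)"
  define b1 where "b1 = \<alpha> *\<^sub>R (D *v \<delta>)"
  define b2 where "b2 = \<alpha> *\<^sub>R (g1 - gs)"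
  define X where "X = et / (et - 1) * (rho M)^2 + et * \<alpha>^2 * L^2"
  define Y where "Y = gt / (gt - 1) * \<alpha>^2 * rho (D ** D) + gt * \<alpha>^2 * L^2"
  have na1: "(norm a1)^2 \<le> (rho M)^2 * (norm \<Delta>)^2" unfolding a1_def by (rule Mb)
  have na2: "(norm a2)^2 \<le> \<alpha>^2 * L^2 * (norm \<Delta>)^2"
  proof -
    have "(norm a2)^2 = \<alpha>^2 * (norm (gk - g1))^2" using alpha by (simp add: a2_def power_mult_distrib)
    also have "\<dots> \<le> \<alpha>^2 * (L^2 * (norm \<Delta>)^2)"
      unfolding gk_def g1_def \<Delta>_def by (rule mult_left_mono[OF GL]) simp
    finally show ?thesis by simp
  qed
  have nb1: "(norm b1)^2 \<le> \<alpha>^2 * rho (D ** D) * (norm \<delta>)^2"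
  proof -
    have "(norm b1)^2 = \<alpha>^2 * (norm (D *v \<delta>))^2" using alpha by (simp add: b1_def power_mult_distrib)
    also have "\<dots> \<le> \<alpha>^2 * (rho (D ** D) * (norm \<delta>)^2)"
      by (rule mult_left_mono[OF Db]) simp
    finally show ?thesis by simp
  qed
  have nb2: "(norm b2)^2 \<le> \<alpha>^2 * L^2 * (norm \<delta>)^2"
  proof -
    have "(norm b2)^2 = \<alpha>^2 * (norm (g1 - gs))^2" using alpha by (simp add: b2_def power_mult_distrib)
    also have "\<dots> \<le> \<alpha>^2 * (L^2 * (norm \<delta>)^2)"
      unfolding g1_def gs_def \<delta>_def by (rule mult_left_mono[OF GL]) simp
    finally show ?thesis by simp
  qed
  have etp: "0 \<le> et / (et - 1)" "0 \<le> et" using et by auto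
  have gtp: "0 \<le> gt / (gt - 1)" "0 \<le> gt" using gt by auto
  have dtp: "0 \<le> dt / (dt - 1)" "0 \<le> dt" using dt by auto
  have A12: "(norm (a1 - a2))^2 \<le> X * (norm \<Delta>)^2"
  proof -
    have "(norm (a1 - a2))^2 = (norm (- a2 + a1))^2" by (simp add: algebra_simps)
    also have "\<dots> \<le> et * (norm (- a2))^2 + et / (et - 1) * (norm a1)^2" by (rule sq_split[OF et])
    also have "\<dots> \<le> et * (\<alpha>^2 * L^2 * (norm \<Delta>)^2) + et / (et - 1) * ((rho M)^2 * (norm \<Delta>)^2)"
      by (intro add_mono mult_left_mono) (simp_all add: na1 na2 etp)
    also have "\<dots> = X * (norm \<Delta>)^2" by (simp add: X_def algebra_simps)
    finally show ?thesis .
  qed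
  have B12: "(norm (b1 - b2))^2 \<le> Y * (norm \<delta>)^2"
  proof -
    have "(norm (b1 - b2))^2 = (norm (- b2 + b1))^2" by (simp add: algebra_simps)
    also have "\<dots> \<le> gt * (norm (- b2))^2 + gt / (gt - 1) * (norm b1)^2" by (rule sq_split[OF gt])
    also have "\<dots> \<le> gt * (\<alpha>^2 * L^2 * (norm \<delta>)^2) + gt / (gt - 1) * (\<alpha>^2 * rho (D ** D) * (norm \<delta>)^2)"
      by (intro add_mono mult_left_mono) (simp_all add: nb1 nb2 gtp)
    also have "\<dots> = Y * (norm \<delta>)^2" by (simp add: Y_def algebra_simps)
    finally show ?thesis .
  qed
  define R where "R = dt * (X * (norm \<Delta>)^2) + dt / (dt - 1) * (Y * (norm \<delta>)^2)"
  have main: "\<alpha>^2 * s * (norm e)^2 \<le> R"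
  proof -
    have "\<alpha>^2 * s * (norm e)^2 \<le> \<alpha>^2 * (norm (tA e))^2"
      using sE by (simp add: mult.assoc mult_left_mono)
    also have "\<dots> = (norm ((a1 - a2) + (b1 - b2)))^2"
      using key nk by (simp add: a1_def a2_def b1_def b2_def)
    also have "\<dots> \<le> dt * (norm (a1 - a2))^2 + dt / (dt - 1) * (norm (b1 - b2))^2"
      by (rule sq_split[OF dt])
    also have "\<dots> \<le> R" unfolding R_def by (intro add_mono mult_left_mono) (simp_all add: A12 B12 dtp)
    finally show ?thesis .
  qed
  have as: "0 < \<alpha>^2 * s" using alpha spos by simp
  have "(norm e)^2 \<le> R / (\<alpha>^2 * s)" using main as by (simp add: pos_le_divide_eq mult.commute)
  also have "R / (\<alpha>^2 * s) = dt / (\<alpha>\<^sup>2 * s) * X * (norm \<Delta>)^2 + dt / ((dt - 1) * \<alpha>\<^sup>2 * s) * Y * (norm \<delta>)^2"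
    unfolding R_def by (simp add: add_divide_distrib)
  finally show ?thesis
    unfolding e_def s_def X_def Y_def \<Delta>_def \<delta>_def D_def .
qed

end
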